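(* Let $\Phi\colon\mathrm{Cl}_{r,s+1}\to\mathrm{Cl}_{s,r+1}$ be the algebra isomorphism determined on orthonormal generators by $\Phi(z_i)=b_ib_{r+1}$ ($i=1,\ldots,r$), $\Phi(\zeta_j)=a_jb_{r+1}$ ($j=1,\ldots,s$), $\Phi(\zeta_{s+1})=b_{r+1}$, where $z_1,\ldots,z_r,\zeta_1,\ldots,\zeta_{s+1}$ are orthonormal generators of $\mathrm{Cl}_{r,s+1}$ ($\langle z_i,z_i\rangle=1$, $\langle\zeta_j,\zeta_j\rangle=-1$) and $a_1,\ldots,a_s,b_1,\ldots,b_{r+1}$ orthonormal generators of $\mathrm{Cl}_{s,r+1}$ ($\langle a_i,a_i\rangle=1$, $\langle b_j,b_j\rangle=-1$). Let $(V,\langle\cdot\,,\cdot\rangle_V)$ be an admissible $\mathrm{Cl}_{s,r+1}$-module with representation $J$ and let $\{v_\alpha\}$ be an integral basis of it such that each $J_{a_i}$ and each $J_{b_j}$ permutes $\{v_\alpha\}$ up to sign. Then $\{v_\alpha\}$ is also an integral basis of the admissible $\mathrm{Cl}_{r,s+1}$-module $(V,\langle\cdot\,,\cdot\rangle_V)$ with representation $J\circ\Phi$.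
   Context: A scalar product is a real symmetric non-degenerate bilinear form. $\mathrm{Cl}_{p,q}$ is the Clifford algebra generated by $\mathbb R^{p,q}$ ($\mathbb R^{p+q}$ with quadratic form $x_1^2+\dots+x_p^2-x_{p+1}^2-\dots-x_{p+q}^2$) with relation $z^2=-\langle z,z\rangle\cdot1$. A $\mathrm{Cl}_{p,q}$-module $V$ with representation $J$ is admissible if it carries a scalar product with $\langle J_zu,v\rangle_V=-\langle u,J_zv\rangle_V$ for all $z,u,v$. An integral basis of an admissible module is a basis $\{v_\alpha\}$ with $\langle v_\alpha,v_\beta\rangle_V=0$ for $\alpha\neq\beta$, $\langle v_\alpha,v_\alpha\rangle_V=\pm1$, and $\langle J_{x}v_\alpha,v_\beta\rangle_V\in\{1,-1,0\}$ for every orthonormal generator $x$ and all $\alpha,\beta$. An operator permutes $\{v_\alpha\}$ up to sign if it maps each $v_\alpha$ to $\pm v_\beta$ for some $\beta$. *)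

theory Defs
  imports "HOL-Analysis.Analysis"
begin

definition gram :: "nat \<Rightarrow> nat \<Rightarrow> nat \<Rightarrow> nat \<Rightarrow> real" where
  "gram p q k l = (if k = l \<and> k < p then 1 else if k = l \<and> p \<le> k \<and> k < p + q then -1 else 0)"

text \<open>A representation J of Cl_{p,q} on V, given (via the universal property) by the images
  of the orthonormal generators: linear maps with J_k J_l + J_l J_k = -2<e_k,e_l> Id,
  i.e. z^2 = -<z,z> 1.\<close>
definition cl_module :: "nat \<Rightarrow> nat \<Rightarrow> (nat \<Rightarrow> 'v::real_vector \<Rightarrow> 'v) \<Rightarrow> bool" where
  "cl_module p q J \<longleftrightarrow> (\<forall>k < p + q. linear (J k)) \<and>
     (\<forall>k < p + q. \<forall>l < p + q. \<forall>x. J k (J l x) + J l (J k x) = (-2 * gram p q k l) *\<^sub>R x)"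

definition Jvec :: "nat \<Rightarrow> nat \<Rightarrow> (nat \<Rightarrow> 'v::real_vector \<Rightarrow> 'v) \<Rightarrow> (nat \<Rightarrow> real) \<Rightarrow> 'v \<Rightarrow> 'v" where
  "Jvec p q J z x = (\<Sum>k < p + q. z k *\<^sub>R J k x)"

definition scalar_product :: "('v::real_vector \<Rightarrow> 'v \<Rightarrow> real) \<Rightarrow> bool" where
  "scalar_product B \<longleftrightarrow> bilinear B \<and> (\<forall>u w. B u w = B w u) \<and>
     (\<forall>u. (\<forall>w. B u w = 0) \<longrightarrow> u = 0)"

definition admissible :: "nat \<Rightarrow> nat \<Rightarrow> ('v::real_vector \<Rightarrow> 'v \<Rightarrow> real) \<Rightarrow> (nat \<Rightarrow> 'v \<Rightarrow> 'v) \<Rightarrow> bool" where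
  "admissible p q B J \<longleftrightarrow> cl_module p q J \<and> scalar_product B \<and>
     (\<forall>z u w. B (Jvec p q J z u) w = - B u (Jvec p q J z w))"

definition integral_basis :: "nat \<Rightarrow> nat \<Rightarrow> ('v::real_vector \<Rightarrow> 'v \<Rightarrow> real) \<Rightarrow> (nat \<Rightarrow> 'v \<Rightarrow> 'v)
     \<Rightarrow> ('i::finite \<Rightarrow> 'v) \<Rightarrow> bool" where
  "integral_basis p q B J v \<longleftrightarrow> inj v \<and> independent (range v) \<and> span (range v) = UNIV \<and>
     (\<forall>a b. a \<noteq> b \<longrightarrow> B (v a) (v b) = 0) \<and>
     (\<forall>a. B (v a) (v a) \<in> {1, -1}) \<and>
     (\<forall>k < p + q. \<forall>a b. B (J k (v a)) (v b) \<in> {1, -1, 0})"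

definition permutes_up_to_sign :: "('v::real_vector \<Rightarrow> 'v) \<Rightarrow> ('i \<Rightarrow> 'v) \<Rightarrow> bool" where
  "permutes_up_to_sign T v \<longleftrightarrow> (\<forall>a. \<exists>b. T (v a) = v b \<or> T (v a) = - v b)"

text \<open>Generators of Cl_{s,r+1}: a_1..a_s are
  indices 0..s-1, b_1..b_{r+1} are indices s..s+r. Generators of Cl_{r,s+1}: z_1..z_r are
  indices 0..r-1, zeta_1..zeta_{s+1} are indices r..r+s.\<close>
definition JPhi :: "nat \<Rightarrow> nat \<Rightarrow> (nat \<Rightarrow> 'v \<Rightarrow> 'v) \<Rightarrow> nat \<Rightarrow> 'v \<Rightarrow> 'v" where
  "JPhi r s J k = (if k < r then J (s + k) \<circ> J (s + r)
                   else if k < r + s then J (k - r) \<circ> J (s + r)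
                   else J (s + r))"

end

theory Submission
  imports Defs
begin

lemma gen_adm:
  assumes "admissible p q B J" "k < p + q"
  shows "B (J k u) w = - B u (J k w)"
proof -
  define z where "z = (\<lambda>i::nat. if i = k then (1::real) else 0)"
  have e: "Jvec p q J z x = J k x" for x
  proof -
    have "Jvec p q J z x = (\<Sum>i<p+q. if i = k then J i x else 0)"
      unfolding Jvec_def by (intro sum.cong) (auto simp: z_def)
    then show ?thesis using assms(2) by simp
  qed
  from assms(1) have "B (Jvec p q J z u) w = - B u (Jvec p q J z w)"
    unfolding admissible_def by blast
  then show ?thesis by (simp add: e)
qed

lemma adm_from_gen:
  fixes B :: "'v::real_vector \<Rightarrow> 'v \<Rightarrow> real"
  assumes bl: "bilinear B" and g: "\<forall>k<p+q. \<forall>u w. B (J k u) w = - B u (J k w)"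
  shows "B (Jvec p q J z u) w = - B u (Jvec p q J z w)"
proof -
  have l: "linear (\<lambda>x. B x w)" and r: "linear (B u)" using bl by (auto simp: bilinear_def)
  have "B (Jvec p q J z u) w = (\<Sum>k<p+q. z k * B (J k u) w)"
    unfolding Jvec_def by (simp add: linear_sum[OF l] linear_scale[OF l])
  also have "\<dots> = (\<Sum>k<p+q. - (z k * B u (J k w)))"
    using g by (intro sum.cong) auto
  also have "\<dots> = - B u (Jvec p q J z w)"
    unfolding Jvec_def by (simp add: linear_sum[OF r] linear_scale[OF r] sum_negf)
  finally show ?thesis .
qed

lemma pus_comp:
  assumes "linear T" "permutes_up_to_sign T v" "permutes_up_to_sign S v"
  shows "permutes_up_to_sign (T \<circ> S) v"
  unfolding permutes_up_to_sign_def
proof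
  fix a
  obtain c where c: "S (v a) = v c \<or> S (v a) = - v c" using assms(3) unfolding permutes_up_to_sign_def by blast
  obtain d where d: "T (v c) = v d \<or> T (v c) = - v d" using assms(2) unfolding permutes_up_to_sign_def by blast
  have "T (- v c) = - T (v c)" using assms(1) by (simp add: linear_neg)
  then show "\<exists>b. (T \<circ> S) (v a) = v b \<or> (T \<circ> S) (v a) = - v b"
    using c d by (auto intro!: exI[of _ d])
qed

lemma cl_sq:
  assumes "cl_module p q J" "m < p + q"
  shows "J m (J m x) = (- gram p q m m) *\<^sub>R x"
proof -
  have "J m (J m x) + J m (J m x) = (-2 * gram p q m m) *\<^sub>R x"
    using assms unfolding cl_module_def by blast
  then have "2 *\<^sub>R J m (J m x) = (-2 * gram p q m m) *\<^sub>R x" by (simp add: scaleR_2)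
  then have "(1/2::real) *\<^sub>R (2 *\<^sub>R J m (J m x)) = (1/2::real) *\<^sub>R ((-2 * gram p q m m) *\<^sub>R x)" by simp
  then show ?thesis by simp
qed

lemma cl_anti:
  assumes "cl_module p q J" "m < p + q" "n < p + q" "m \<noteq> n"
  shows "J m (J n x) = - J n (J m x)"
proof -
  have "J m (J n x) + J n (J m x) = (-2 * gram p q m n) *\<^sub>R x"
    using assms unfolding cl_module_def by blast
  also have "gram p q m n = 0" using assms(4) by (simp add: gram_def)
  finally show ?thesis by (simp add: eq_neg_iff_add_eq_0)
qed

definition idx :: "nat \<Rightarrow> nat \<Rightarrow> nat \<Rightarrow> nat" where
  "idx r s k = (if k < r then s + k else k - r)"

lemma gram_idx:
  assumes "k < r + s" "l < r + s"
  shows "gram s (r+1) (idx r s k) (idx r s l) = - gram r (s+1) k l"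
  using assms unfolding gram_def idx_def by auto

lemma idx_lt: "k < r + s \<Longrightarrow> idx r s k < s + r"
  unfolding idx_def by auto

lemma JPhi_idx: "k < r + s \<Longrightarrow> JPhi r s J k = J (idx r s k) \<circ> J (s + r)"
  unfolding JPhi_def idx_def by auto

lemma JPhi_last: "JPhi r s J (r + s) = J (s + r)"
  unfolding JPhi_def by auto

theorem corollary3p2:
  fixes r s :: nat
    and B :: "'v::real_vector \<Rightarrow> 'v \<Rightarrow> real"
    and J :: "nat \<Rightarrow> 'v \<Rightarrow> 'v"
    and v :: "'i::finite \<Rightarrow> 'v"
  assumes "admissible s (r + 1) B J"
    and "integral_basis s (r + 1) B J v"
    and "\<forall>k < s + (r + 1). permutes_up_to_sign (J k) v"
  shows "admissible r (s + 1) B (JPhi r s J) \<and> integral_basis r (s + 1) B (JPhi r s J) v"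
proof -
  have cl: "cl_module s (r+1) J" and sp: "scalar_product B"
    using assms(1) unfolding admissible_def by auto
  have bl: "bilinear B" using sp unfolding scalar_product_def by auto
  have lin: "linear (J m)" if "m < s + (r+1)" for m using cl that unfolding cl_module_def by auto
  define b where "b = s + r"
  have bb: "J b (J b x) = x" for x
    using cl_sq[OF cl, of b x] by (simp add: b_def gram_def)
  have ba: "J b (J m x) = - J m (J b x)" if "m < s + r" for m x
    using cl_anti[OF cl, of b m x] that by (simp add: b_def)
  have linb: "linear (J b)" using lin by (simp add: b_def)
  have Jnegm: "J m (- y) = - J m y" if "m < s + (r+1)" for m y
    using lin[OF that] by (simp add: linear_neg)
  have JPi: "JPhi r s J k = J (idx r s k) \<circ> J b" if "k < r + s" for k
    using JPhi_idx[OF that] by (simp add: b_def)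
  have JPl: "JPhi r s J (r + s) = J b" using JPhi_last by (simp add: b_def)
  have kcases: "k < r + s \<or> k = r + s" if "k < r + (s + 1)" for k using that by auto
  have linP: "linear (JPhi r s J k)" if "k < r + (s+1)" for k
  proof (cases "k < r + s")
    case True
    then show ?thesis using JPi[OF True] lin idx_lt[OF True] linb
      by (simp add: linear_compose)
  next
    case False
    then have "k = r + s" using that by auto
    then show ?thesis using JPl linb by simp
  qed
  have rel: "JPhi r s J k (JPhi r s J l x) + JPhi r s J l (JPhi r s J k x)
      = (-2 * gram r (s+1) k l) *\<^sub>R x" if k: "k < r + (s+1)" and l: "l < r + (s+1)" for k l x
  proof -
    have g1: "gram r (s+1) k (r+s) = 0" if "k < r + s" for k using that by (simp add: gram_def)
    have g2: "gram r (s+1) (r+s) k = 0" if "k < r + s" for k using that by (simp add: gram_def)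
    have g3: "gram r (s+1) (r+s) (r+s) = -1" by (simp add: gram_def)
    have one: "J m (J b (J n (J b x))) = - J m (J n x)" if "m < s + r" "n < s + r" for m n
    proof -
      have "J b (J n (J b x)) = - J n (J b (J b x))" using ba[OF that(2)] by simp
      then show ?thesis using bb Jnegm[of m] that(1) by simp
    qed
    show ?thesis
    proof (cases "k < r + s")
      case kT: True
      show ?thesis
      proof (cases "l < r + s")
        case lT: True
        let ?m = "idx r s k" and ?n = "idx r s l"
        have mn: "?m < s + r" "?n < s + r" using idx_lt kT lT by auto
        have "J ?m (J ?n x) + J ?n (J ?m x) = (-2 * gram s (r+1) ?m ?n) *\<^sub>R x"
          using cl mn unfolding cl_module_def by auto
        then show ?thesis
        proof -
          assume H: "J ?m (J ?n x) + J ?n (J ?m x) = (-2 * gram s (r+1) ?m ?n) *\<^sub>R x"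
          have "- J ?m (J ?n x) - J ?n (J ?m x) = - (J ?m (J ?n x) + J ?n (J ?m x))"
            by (simp add: algebra_simps)
          then show ?thesis using H one[OF mn] one[OF mn(2) mn(1)] JPi kT lT gram_idx[OF kT lT]
            by simp
        qed
      next
        case lF: False
        then have le: "l = r + s" using l by auto
        have m: "idx r s k < s + r" using idx_lt kT by auto
        have "J (idx r s k) (J b (J b x)) + J b (J (idx r s k) (J b x)) = 0"
          using bb ba[OF m] by simp
        then show ?thesis using JPi[OF kT] JPl le g1[OF kT] by simp
      qed
    next
      case kF: False
      then have ke: "k = r + s" using k by auto
      show ?thesis
      proof (cases "l < r + s")
        case lT: True
        have m: "idx r s l < s + r" using idx_lt lT by auto
        have "J b (J (idx r s l) (J b x)) + J (idx r s l) (J b (J b x)) = 0"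
          using bb ba[OF m] by simp
        then show ?thesis using JPi[OF lT] JPl ke g2[OF lT] by simp
      next
        case lF: False
        then have le: "l = r + s" using l by auto
        show ?thesis using JPl ke le g3 bb by (simp add: scaleR_2)
      qed
    qed
  qed
  have clP: "cl_module r (s+1) (JPhi r s J)"
    unfolding cl_module_def using linP rel by blast
  have gJ: "B (J m u) w = - B u (J m w)" if "m < s + (r+1)" for m u w
    using gen_adm[OF assms(1) that] .
  have gP: "\<forall>k<r + (s+1). \<forall>u w. B (JPhi r s J k u) w = - B u (JPhi r s J k w)"
  proof (intro allI impI)
    fix k u w assume k: "k < r + (s+1)"
    have hb: "b < s + (r+1)" by (simp add: b_def)
    show "B (JPhi r s J k u) w = - B u (JPhi r s J k w)"
    proof (cases "k < r + s")
      case True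
      have m: "idx r s k < s + (r+1)" using idx_lt[OF True] by simp
      show ?thesis using JPi[OF True] gJ[OF m] gJ[OF hb] cl_anti[OF cl, of b "idx r s k" w]
          idx_lt[OF True] bilinear_rneg[OF bl] by (simp add: b_def)
    next
      case False
      then have "k = r + s" using k by auto
      then show ?thesis using JPl gJ[OF hb] by simp
    qed
  qed
  have admP: "admissible r (s + 1) B (JPhi r s J)"
    unfolding admissible_def using clP sp adm_from_gen[OF bl gP] by blast
  have ib: "inj v" "independent (range v)" "span (range v) = UNIV"
    "\<forall>a c. a \<noteq> c \<longrightarrow> B (v a) (v c) = 0" "\<forall>a. B (v a) (v a) \<in> {1, -1}"
    using assms(2) unfolding integral_basis_def by auto
  have pP: "permutes_up_to_sign (JPhi r s J k) v" if k: "k < r + (s+1)" for k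
  proof (cases "k < r + s")
    case True
    have m: "idx r s k < s + (r+1)" using idx_lt[OF True] by simp
    have p1: "permutes_up_to_sign (J (idx r s k)) v" using assms(3) m by simp
    have p2: "permutes_up_to_sign (J b) v" using assms(3) by (simp add: b_def)
    show ?thesis using JPi[OF True] pus_comp[OF lin[OF m] p1 p2] by simp
  next
    case False
    then have "k = r + s" using k by auto
    then show ?thesis using JPl assms(3) by (simp add: b_def)
  qed
  have Bv: "B (v d) (v c) \<in> {1, -1, 0}" for d c
    using ib(4,5) by (cases "d = c") auto
  have vals: "\<forall>k < r + (s+1). \<forall>a c. B (JPhi r s J k (v a)) (v c) \<in> {1, -1, 0}"
  proof (intro allI impI)
    fix k a c assume k: "k < r + (s+1)"
    obtain d where d: "JPhi r s J k (v a) = v d \<or> JPhi r s J k (v a) = - v d"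
      using pP[OF k] unfolding permutes_up_to_sign_def by blast
    show "B (JPhi r s J k (v a)) (v c) \<in> {1, -1, 0}"
      using d Bv[of d c] bilinear_lneg[OF bl, of "v d" "v c"] by auto
  qed
  have "integral_basis r (s + 1) B (JPhi r s J) v"
    unfolding integral_basis_def using ib vals by blast
  with admP show ?thesis by blast
qed

end
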